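(* Let $a,b,c\in S^0$ be real-valued on $[0,T]\times\mathbb R^n\times\mathbb R^n$ with $b\ge\delta_1t$, $|ac|\le\bar\epsilon b^2$, $|c|\le\bar\epsilon b^{3/2}$ ($\bar\epsilon$ a sufficiently small absolute constant) and $\partial_tc=\mathcal O(b)$. Then there is $\epsilon>0$ such that the matrix $S-\epsilon t\,\partial_tS$ is positive semidefinite at every point of $[0,T]\times\mathbb R^n\times\mathbb R^n$.
   Context: $S^0=S^0_{1,0}(\mathbb R^n\times\mathbb R^n)$, symbols depending smoothly on $t\in[0,T]$ with seminorms of the symbols and of their $t$-derivatives bounded uniformly; $f=\mathcal O(g)$ means $|f|\le Cg$ on $[0,T]\times\mathbb R^{2n}$. $S=\frac13\begin{pmatrix}3&2a&-b\\ 2a&2(a^2+b)&-ab-3c\\ -b&-ab-3c&b^2-2ac\end{pmatrix}$. *)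

theory Defs
  imports "HOL-Analysis.Analysis"
begin

text \<open>Points of [0,T] x R^n x R^n are written z = (t, (x, xi)).\<close>
type_synonym ('n) pt = "real \<times> ((real^'n) \<times> (real^'n))"

definition Dom :: "real \<Rightarrow> ('n::finite) pt set" where
  "Dom T = {0..T} \<times> UNIV"

definition tdir :: "('n::finite) pt" where "tdir = (1, (0, 0))"
definition xdirs :: "('n::finite) pt set" where "xdirs = {(0, (e, 0)) | e. e \<in> Basis}"
definition xidirs :: "('n::finite) pt set" where "xidirs = {(0, (0, e)) | e. e \<in> Basis}"
definition dirs :: "('n::finite) pt set" where "dirs = insert tdir (xdirs \<union> xidirs)"

text \<open>Partial derivative in direction v (one-sided in t at the endpoints of [0,T]).\<close>
definition dD :: "real \<Rightarrow> ('n::finite) pt \<Rightarrow> (('n::finite) pt \<Rightarrow> real) \<Rightarrow> (('n::finite) pt \<Rightarrow> real)" where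
  "dD T v f = (\<lambda>z. frechet_derivative f (at z within Dom T) v)"

fun dDs :: "real \<Rightarrow> ('n::finite) pt list \<Rightarrow> (('n::finite) pt \<Rightarrow> real) \<Rightarrow> (('n::finite) pt \<Rightarrow> real)" where
  "dDs T [] f = f"
| "dDs T (v # vs) f = dD T v (dDs T vs f)"

definition dt :: "real \<Rightarrow> (('n::finite) pt \<Rightarrow> real) \<Rightarrow> (('n::finite) pt \<Rightarrow> real)" where
  "dt T f = dD T tdir f"

text \<open>Symbols in S^0_{1,0} depending smoothly on t in [0,T], all t-derivatives being
  S^0 symbols with uniformly bounded seminorms:
  |d_t^k d_x^beta d_xi^alpha f| <= C (1+|xi|)^(-|alpha|) on [0,T] x R^n x R^n.\<close>
definition tsymbol0 :: "real \<Rightarrow> (('n::finite) pt \<Rightarrow> real) \<Rightarrow> bool" where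
  "tsymbol0 T f \<longleftrightarrow>
     (\<forall>vs. set vs \<subseteq> dirs \<longrightarrow>
        (\<forall>z\<in>Dom T. dDs T vs f differentiable (at z within Dom T)) \<and>
        (\<exists>C. \<forall>z\<in>Dom T. \<bar>dDs T vs f z\<bar>
              \<le> C * (1 + norm (snd (snd z))) powr (- real (length (filter (\<lambda>v. v \<in> xidirs) vs)))))"

definition Smat :: "real \<Rightarrow> real \<Rightarrow> real \<Rightarrow> real^3^3" where
  "Smat a b c = (1/3) *\<^sub>R vector [
      vector [3, 2*a, -b],
      vector [2*a, 2*(a^2+b), -a*b - 3*c],
      vector [-b, -a*b - 3*c, b^2 - 2*a*c]]"

definition dtS :: "real \<Rightarrow> (('n::finite) pt \<Rightarrow> real) \<Rightarrow> (('n::finite) pt \<Rightarrow> real) \<Rightarrow> (('n::finite) pt \<Rightarrow> real)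
    \<Rightarrow> ('n::finite) pt \<Rightarrow> real^3^3" where
  "dtS T a b c z = (\<chi> i j. dt T (\<lambda>w. Smat (a w) (b w) (c w) $ i $ j) z)"

definition psd :: "real^'m^'m \<Rightarrow> bool" where
  "psd M \<longleftrightarrow> transpose M = M \<and> (\<forall>v. 0 \<le> v \<bullet> (M *v v))"

end

theory Submission
  imports Defs
begin


lemma idM: "3* v1* v1 + 2*(2* a)* v1* v2 + 2*(-b)* v1* v3 + 2*(a^2+b)* v2* v2 + 2*(-a* b-3* c)* v2* v3 + (b^2-2* a* c)* v3* v3
  = (3* v1+2* a* v2-b* v3)^2/3 + ((2* a^2/3+2* b)* v2^2-2*(a* b/3+3* c)* v2* v3+(2* b^2/3-2* a* c)* v3^2)" for a b c v1 v2 v3 :: real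
  by (simp add: field_simps power2_eq_square)

lemma idD: "2*(2* A)* v1* v2 + 2*(-B)* v1* v3 + (4* a* A+2* B)* v2* v2 + 2*(-(A* b+a* B)-3* C)* v2* v3 + (2* b* B-2*(A* c+a* C))* v3* v3
  = 4/3* A* u* v2 - 2/3* B* u* v3 + (4/3* a* A+2* B)* v2^2 + (-2/3* A* b-2/3* a* B-6* C)* v2* v3 + (4/3* b* B-2* A* c-2* a* C)* v3^2"
  if "u = 3* v1+2* a* v2-b* v3" for a b c A B C u v1 v2 v3 :: real
  unfolding that by (simp add: field_simps power2_eq_square)


lemma amgm2: "2* \<bar>x* y\<bar> \<le> x^2 + y^2" for x y :: real
proof -
  have "0 \<le> (\<bar>x\<bar> - \<bar>y\<bar>)^2" by simp
  thus ?thesis by (simp add: power2_eq_square algebra_simps abs_mult)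
qed

lemma lin1: "p \<le> P \<Longrightarrow> q \<le> Q \<Longrightarrow> r \<le> R \<Longrightarrow> 0 \<le> x \<Longrightarrow> 0 \<le> y \<Longrightarrow> 0 \<le> z \<Longrightarrow>
  2* P \<le> y + z \<Longrightarrow> 200* Q \<le> x + z \<Longrightarrow> R \<le> z/100 \<Longrightarrow>
  y/4 + x/4 + z/4 \<le> 2/3* y + 2* x - 2/3* p - 6* q + 2/3* z - 2* r" for P p q Q r R x y z :: real
  by linarith

lemma Nlow:
  fixes a b c v2 v3 :: real
  assumes b: "0 \<le> b" and ac: "\<bar>a* c\<bar> \<le> b^2/100" and c: "\<bar>c\<bar> \<le> b* sqrt b/100"
  shows "(2* a^2/3+2* b)* v2^2-2*(a* b/3+3* c)* v2* v3+(2* b^2/3-2* a* c)* v3^2 \<ge> (a^2* v2^2)/4 + (b* v2^2)/4 + (b^2* v3^2)/4"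
proof -
  have h1: "2* \<bar>a* b* v2* v3\<bar> \<le> a^2* v2^2 + b^2* v3^2"
    using amgm2[of "a* v2" "b* v3"] by (simp add: power_mult_distrib mult_ac)
  have sb: "sqrt b ^2 = b" using b by simp
  have h2a: "2* \<bar>(sqrt b* v2)*(b* v3)\<bar> \<le> b* v2^2 + b^2* v3^2"
    using amgm2[of "sqrt b* v2" "b* v3"] sb by (simp add: power_mult_distrib)
  have h2b: "\<bar>c* v2* v3\<bar> \<le> (b* sqrt b/100) * \<bar>v2* v3\<bar>"
    using mult_right_mono[OF c, of "\<bar>v2* v3\<bar>"] by (simp add: abs_mult)
  have h2c: "\<bar>(sqrt b* v2)*(b* v3)\<bar> = b* sqrt b * \<bar>v2* v3\<bar>"
    using b by (simp add: abs_mult mult_ac)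
  have h2d: "\<bar>c* v2* v3\<bar> \<le> (b* sqrt b * \<bar>v2* v3\<bar>)/100" using h2b by simp
  have h2: "200* \<bar>c* v2* v3\<bar> \<le> b* v2^2 + b^2* v3^2" using h2a h2d h2c by linarith
  have h3: "\<bar>a* c* v3^2\<bar> \<le> b^2* v3^2/100"
    using mult_right_mono[OF ac, of "v3^2"] by (simp add: abs_mult)
  have e: "(2* a^2/3+2* b)* v2^2-2*(a* b/3+3* c)* v2* v3+(2* b^2/3-2* a* c)* v3^2
     = 2/3*(a^2* v2^2) + 2*(b* v2^2) - 2/3*(a* b* v2* v3) - 6*(c* v2* v3) + 2/3*(b^2* v3^2) - 2*(a* c* v3^2)"
    by (simp add: algebra_simps)
  have "a* b* v2* v3 \<le> \<bar>a* b* v2* v3\<bar>" "\<bar>c* v2* v3\<bar> \<ge> c* v2* v3" "\<bar>a* c* v3^2\<bar> \<ge> a* c* v3^2" by auto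
  moreover have "0 \<le> b* v2^2" "0 \<le> a^2* v2^2" "0 \<le> b^2* v3^2" using b by auto
  ultimately show ?thesis unfolding e using h1 h2 h3 by (rule lin1)
qed


lemma tbnd: "0 \<le> \<tau> \<Longrightarrow> \<tau> \<le> b \<Longrightarrow> \<bar>A\<bar> \<le> K \<Longrightarrow> 0 \<le> X \<Longrightarrow> \<tau>*(\<bar>A\<bar>* X) \<le> K*(b* X)" for \<tau> b A K X :: real
proof -
  assume h: "0 \<le> \<tau>" "\<tau> \<le> b" "\<bar>A\<bar> \<le> K" "0 \<le> X"
  have "\<tau>* \<bar>A\<bar> \<le> b* K" using h by (intro mult_mono) auto
  hence "\<tau>* \<bar>A\<bar>* X \<le> b* K* X" using h(4) by (rule mult_right_mono)
  thus ?thesis by (simp add: mult_ac)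
qed

lemma tri_add: "\<bar>x\<bar> \<le> X \<Longrightarrow> \<bar>y\<bar> \<le> Y \<Longrightarrow> \<bar>x+y\<bar> \<le> X+Y" for x y X Y :: real by linarith
lemma tri_diff: "\<bar>x\<bar> \<le> X \<Longrightarrow> \<bar>y\<bar> \<le> Y \<Longrightarrow> \<bar>x-y\<bar> \<le> X+Y" for x y X Y :: real by linarith
lemma tri_sc: "\<bar>y\<bar> \<le> Y \<Longrightarrow> 0 \<le> c \<Longrightarrow> \<bar>c* y\<bar> \<le> c* Y" for c y Y :: real
  by (simp add: abs_mult mult_left_mono)

lemma fin:
  fixes K KK r1 r2 r5 r6 u2 aa bv bb p1 p2 p3 p4 p5 p6 p7 p8 p9 p10 E :: real
  assumes "E \<le> 4/3* p1 + 2/3* p2 + 4/3* p3 + 2* p4 + 2/3* p5 + 2/3* p6 + 6* p7 + 4/3* p8 + 2* p9 + 2* p10"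
  "p1 \<le> r1" "p2 \<le> r2" "p3 \<le> KK* bv" "p4 \<le> K* bv" "p5 \<le> r5" "p6 \<le> r6" "p7 \<le> r5" "p8 \<le> K* bb"
  "p9 \<le> KK* bb" "p10 \<le> KK* bb"
  "2* r1 \<le> K* u2 + KK* bv" "2* r2 \<le> K* u2 + K* bb" "2* r5 \<le> KK* bv + K* bb" "2* r6 \<le> K* aa + K* bb"
  "K* u2 \<le> KK* u2" "K* aa \<le> KK* aa" "K* bv \<le> KK* bv" "K* bb \<le> KK* bb"
  "0 \<le> KK* u2" "0 \<le> KK* aa" "0 \<le> KK* bv" "0 \<le> KK* bb"
  shows "E \<le> 10*(KK* u2) + 10*(KK* aa) + 10*(KK* bv) + 10*(KK* bb)"
  using assms by linarith

lemma Pbound: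
  fixes a b c A B C u v2 v3 K \<tau> :: real
  assumes K: "1 \<le> K" and a: "\<bar>a\<bar> \<le> K" and b0: "0 \<le> b" and bK: "b \<le> K"
    and A: "\<bar>A\<bar> \<le> K" and B: "\<bar>B\<bar> \<le> K" and C: "\<bar>C\<bar> \<le> K* b"
    and c: "\<bar>c\<bar> \<le> b* sqrt b/100" and t0: "0 \<le> \<tau>" and tb: "\<tau> \<le> b"
  shows "\<tau>* \<bar>4/3* A* u* v2 - 2/3* B* u* v3 + (4/3* a* A+2* B)* v2^2 + (-2/3* A* b-2/3* a* B-6* C)* v2* v3 + (4/3* b* B-2* A* c-2* a* C)* v3^2\<bar>
     \<le> 10*((K* K)*(u^2)) + 10*((K* K)*(a^2* v2^2)) + 10*((K* K)*(b* v2^2)) + 10*((K* K)*(b^2* v3^2))"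
proof -
  define X1 where "X1 = \<bar>u* v2\<bar>"
  define X2 where "X2 = \<bar>u* v3\<bar>"
  define X4 where "X4 = \<bar>v2* v3\<bar>"
  have X: "0 \<le> X1" "0 \<le> X2" "0 \<le> X4" "0 \<le> v2^2" "0 \<le> v3^2" unfolding X1_def X2_def X4_def by auto
  have e: "4/3* A* u* v2 - 2/3* B* u* v3 + (4/3* a* A+2* B)* v2^2 + (-2/3* A* b-2/3* a* B-6* C)* v2* v3 + (4/3* b* B-2* A* c-2* a* C)* v3^2
    = 4/3*(A* u* v2) - 2/3*(B* u* v3) + 4/3*((a* A)* v2^2) + 2*(B* v2^2) - 2/3*((A* b)*(v2* v3)) - 2/3*((a* B)*(v2* v3))
      - 6*(C*(v2* v3)) + 4/3*((b* B)* v3^2) - 2*((A* c)* v3^2) - 2*((a* C)* v3^2)"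
    by (simp add: algebra_simps)
  have abs_sum: "\<bar>4/3*(A* u* v2) - 2/3*(B* u* v3) + 4/3*((a* A)* v2^2) + 2*(B* v2^2) - 2/3*((A* b)*(v2* v3)) - 2/3*((a* B)*(v2* v3))
      - 6*(C*(v2* v3)) + 4/3*((b* B)* v3^2) - 2*((A* c)* v3^2) - 2*((a* C)* v3^2)\<bar>
     \<le> 4/3*(\<bar>A\<bar>* X1) + 2/3*(\<bar>B\<bar>* X2) + 4/3*(\<bar>a* A\<bar>* v2^2) + 2*(\<bar>B\<bar>* v2^2) + 2/3*(\<bar>A* b\<bar>* X4) + 2/3*(\<bar>a* B\<bar>* X4)
      + 6*(\<bar>C\<bar>* X4) + 4/3*(\<bar>b* B\<bar>* v3^2) + 2*(\<bar>A* c\<bar>* v3^2) + 2*(\<bar>a* C\<bar>* v3^2)"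
  proof -
    have q: "\<bar>A* u* v2\<bar> = \<bar>A\<bar>* X1" "\<bar>B* u* v3\<bar> = \<bar>B\<bar>* X2" "\<bar>(a* A)* v2^2\<bar> = \<bar>a* A\<bar>* v2^2"
      "\<bar>B* v2^2\<bar> = \<bar>B\<bar>* v2^2" "\<bar>(A* b)*(v2* v3)\<bar> = \<bar>A* b\<bar>* X4" "\<bar>(a* B)*(v2* v3)\<bar> = \<bar>a* B\<bar>* X4"
      "\<bar>C*(v2* v3)\<bar> = \<bar>C\<bar>* X4" "\<bar>(b* B)* v3^2\<bar> = \<bar>b* B\<bar>* v3^2" "\<bar>(A* c)* v3^2\<bar> = \<bar>A* c\<bar>* v3^2"
      "\<bar>(a* C)* v3^2\<bar> = \<bar>a* C\<bar>* v3^2"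
      unfolding X1_def X2_def X4_def by (simp_all add: abs_mult)
    show ?thesis
      by (intro tri_add tri_diff tri_sc; simp add: q[symmetric])
  qed
  have sbK: "sqrt b \<le> K"
  proof (cases "b \<le> 1")
    case True thus ?thesis using K b0 by (metis order_trans real_sqrt_le_1_iff)
  next
    case False
    hence "sqrt b \<le> b" using real_sqrt_le_mono[of b "b^2"] b0 by (simp add: power2_eq_square)
    thus ?thesis using bK by linarith
  qed
  have t1: "\<tau>*(\<bar>A\<bar>* X1) \<le> K*(b* X1)" using tbnd[OF t0 tb A X(1)] .
  have t2: "\<tau>*(\<bar>B\<bar>* X2) \<le> K*(b* X2)" using tbnd[OF t0 tb B X(2)] .
  have t3: "\<tau>*(\<bar>a* A\<bar>* v2^2) \<le> (K* K)*(b* v2^2)"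
  proof -
    have "\<bar>a* A\<bar> \<le> K* K" unfolding abs_mult using a A by (intro mult_mono) auto
    thus ?thesis using tbnd[OF t0 tb _ X(4)] by auto
  qed
  have t4: "\<tau>*(\<bar>B\<bar>* v2^2) \<le> K*(b* v2^2)" using tbnd[OF t0 tb B X(4)] .
  have t5: "\<tau>*(\<bar>A* b\<bar>* X4) \<le> K*(b^2* X4)"
  proof -
    have "\<tau>*(\<bar>A\<bar>*(b* X4)) \<le> K*(b*(b* X4))" using tbnd[OF t0 tb A] X(3) b0 by simp
    thus ?thesis using b0 by (simp add: abs_mult power2_eq_square mult_ac)
  qed
  have t6: "\<tau>*(\<bar>a* B\<bar>* X4) \<le> K*(b*(\<bar>a\<bar>* X4))"
  proof -
    have "\<tau>*(\<bar>B\<bar>*(\<bar>a\<bar>* X4)) \<le> K*(b*(\<bar>a\<bar>* X4))" using tbnd[OF t0 tb B] X(3) by simp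
    thus ?thesis by (simp add: abs_mult mult_ac)
  qed
  have t7: "\<tau>*(\<bar>C\<bar>* X4) \<le> K*(b^2* X4)"
  proof -
    have "\<tau>* \<bar>C\<bar> \<le> b*(K* b)" using t0 tb C by (intro mult_mono) auto
    hence "\<tau>* \<bar>C\<bar>* X4 \<le> b*(K* b)* X4" using X(3) by (rule mult_right_mono)
    thus ?thesis by (simp add: power2_eq_square mult_ac)
  qed
  have t8: "\<tau>*(\<bar>b* B\<bar>* v3^2) \<le> K*(b^2* v3^2)"
  proof -
    have "\<tau>*(\<bar>B\<bar>*(b* v3^2)) \<le> K*(b*(b* v3^2))" using tbnd[OF t0 tb B] X(5) b0 by simp
    thus ?thesis using b0 by (simp add: abs_mult power2_eq_square mult_ac)
  qed
  have t9: "\<tau>*(\<bar>A* c\<bar>* v3^2) \<le> (K* K)*(b^2* v3^2)"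
  proof -
    have "\<bar>c\<bar> \<le> b* K" using c sbK b0 mult_left_mono[OF sbK b0] by linarith
    hence "\<tau>* \<bar>c\<bar> \<le> b*(b* K)" using t0 tb by (intro mult_mono) auto
    hence "\<tau>* \<bar>c\<bar>* \<bar>A\<bar> \<le> b*(b* K)* K" using A b0 K by (intro mult_mono[OF _ A]) auto
    hence "\<tau>* \<bar>c\<bar>* \<bar>A\<bar>* v3^2 \<le> b*(b* K)* K* v3^2" using X(5) by (rule mult_right_mono)
    thus ?thesis by (simp add: abs_mult power2_eq_square mult_ac)
  qed
  have t10: "\<tau>*(\<bar>a* C\<bar>* v3^2) \<le> (K* K)*(b^2* v3^2)"
  proof -
    have "\<tau>* \<bar>C\<bar> \<le> b*(K* b)" using t0 tb C by (intro mult_mono) auto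
    hence "\<tau>* \<bar>C\<bar>* \<bar>a\<bar> \<le> b*(K* b)* K" using a b0 K by (intro mult_mono[OF _ a]) auto
    hence "\<tau>* \<bar>C\<bar>* \<bar>a\<bar>* v3^2 \<le> b*(K* b)* K* v3^2" using X(5) by (rule mult_right_mono)
    thus ?thesis by (simp add: abs_mult power2_eq_square mult_ac)
  qed
  have g1: "2*(b* X1) \<le> u^2 + K*(b* v2^2)"
  proof -
    have "2* \<bar>u*(b* v2)\<bar> \<le> u^2 + (b* v2)^2" by (rule amgm2)
    moreover have "(b* v2)^2 \<le> K*(b* v2^2)" using mult_right_mono[OF bK, of "b* v2^2"] b0
      by (simp add: power2_eq_square mult_ac)
    moreover have "\<bar>u*(b* v2)\<bar> = b* X1" unfolding X1_def using b0 by (simp add: abs_mult)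
    ultimately show ?thesis by linarith
  qed
  have g2: "2*(b* X2) \<le> u^2 + b^2* v3^2"
  proof -
    have "2* \<bar>u*(b* v3)\<bar> \<le> u^2 + (b* v3)^2" by (rule amgm2)
    moreover have "\<bar>u*(b* v3)\<bar> = b* X2" unfolding X2_def using b0 by (simp add: abs_mult)
    ultimately show ?thesis by (simp add: power_mult_distrib)
  qed
  have g3: "2*(b^2* X4) \<le> K*(b* v2^2) + b^2* v3^2"
  proof -
    have "2* \<bar>(b* v2)*(b* v3)\<bar> \<le> (b* v2)^2 + (b* v3)^2" by (rule amgm2)
    moreover have "(b* v2)^2 \<le> K*(b* v2^2)" using mult_right_mono[OF bK, of "b* v2^2"] b0
      by (simp add: power2_eq_square mult_ac)
    moreover have "\<bar>(b* v2)*(b* v3)\<bar> = b^2* X4" unfolding X4_def using b0 by (simp add: abs_mult power2_eq_square mult_ac)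
    ultimately show ?thesis by (simp add: power_mult_distrib)
  qed
  have g4: "2*(b*(\<bar>a\<bar>* X4)) \<le> a^2* v2^2 + b^2* v3^2"
  proof -
    have "2* \<bar>(a* v2)*(b* v3)\<bar> \<le> (a* v2)^2 + (b* v3)^2" by (rule amgm2)
    moreover have "\<bar>(a* v2)*(b* v3)\<bar> = b*(\<bar>a\<bar>* X4)" unfolding X4_def using b0 by (simp add: abs_mult mult_ac)
    ultimately show ?thesis by (simp add: power_mult_distrib)
  qed
  have k1: "2*(K*(b* X1)) \<le> K* u^2 + (K* K)*(b* v2^2)" using mult_left_mono[OF g1, of K] K by (simp add: algebra_simps)
  have k2: "2*(K*(b* X2)) \<le> K* u^2 + K*(b^2* v3^2)" using mult_left_mono[OF g2, of K] K by (simp add: algebra_simps)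
  have k3: "2*(K*(b^2* X4)) \<le> (K* K)*(b* v2^2) + K*(b^2* v3^2)" using mult_left_mono[OF g3, of K] K by (simp add: algebra_simps)
  have k4: "2*(K*(b*(\<bar>a\<bar>* X4))) \<le> K*(a^2* v2^2) + K*(b^2* v3^2)" using mult_left_mono[OF g4, of K] K by (simp add: algebra_simps)
  have KK0: "K \<le> K* K" using K mult_left_mono[OF K, of K] by simp
  have KK: "K*(u^2) \<le> (K* K)*(u^2)" "K*(a^2* v2^2) \<le> (K* K)*(a^2* v2^2)" "K*(b* v2^2) \<le> (K* K)*(b* v2^2)"
     "K*(b^2* v3^2) \<le> (K* K)*(b^2* v3^2)"
    using b0 by (auto intro!: mult_right_mono[OF KK0])
  have nn: "0 \<le> (K* K)*(u^2)" "0 \<le> (K* K)*(a^2* v2^2)" "0 \<le> (K* K)*(b* v2^2)" "0 \<le> (K* K)*(b^2* v3^2)"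
    using b0 by auto
  have main: "\<tau>* \<bar>4/3*(A* u* v2) - 2/3*(B* u* v3) + 4/3*((a* A)* v2^2) + 2*(B* v2^2) - 2/3*((A* b)*(v2* v3)) - 2/3*((a* B)*(v2* v3))
      - 6*(C*(v2* v3)) + 4/3*((b* B)* v3^2) - 2*((A* c)* v3^2) - 2*((a* C)* v3^2)\<bar>
     \<le> \<tau>*(4/3*(\<bar>A\<bar>* X1) + 2/3*(\<bar>B\<bar>* X2) + 4/3*(\<bar>a* A\<bar>* v2^2) + 2*(\<bar>B\<bar>* v2^2) + 2/3*(\<bar>A* b\<bar>* X4) + 2/3*(\<bar>a* B\<bar>* X4)
      + 6*(\<bar>C\<bar>* X4) + 4/3*(\<bar>b* B\<bar>* v3^2) + 2*(\<bar>A* c\<bar>* v3^2) + 2*(\<bar>a* C\<bar>* v3^2))"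
    using abs_sum t0 by (rule mult_left_mono)
  have dist: "\<tau>*(4/3*(\<bar>A\<bar>* X1) + 2/3*(\<bar>B\<bar>* X2) + 4/3*(\<bar>a* A\<bar>* v2^2) + 2*(\<bar>B\<bar>* v2^2) + 2/3*(\<bar>A* b\<bar>* X4) + 2/3*(\<bar>a* B\<bar>* X4)
      + 6*(\<bar>C\<bar>* X4) + 4/3*(\<bar>b* B\<bar>* v3^2) + 2*(\<bar>A* c\<bar>* v3^2) + 2*(\<bar>a* C\<bar>* v3^2))
     = 4/3*(\<tau>*(\<bar>A\<bar>* X1)) + 2/3*(\<tau>*(\<bar>B\<bar>* X2)) + 4/3*(\<tau>*(\<bar>a* A\<bar>* v2^2)) + 2*(\<tau>*(\<bar>B\<bar>* v2^2)) + 2/3*(\<tau>*(\<bar>A* b\<bar>* X4)) + 2/3*(\<tau>*(\<bar>a* B\<bar>* X4))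
      + 6*(\<tau>*(\<bar>C\<bar>* X4)) + 4/3*(\<tau>*(\<bar>b* B\<bar>* v3^2)) + 2*(\<tau>*(\<bar>A* c\<bar>* v3^2)) + 2*(\<tau>*(\<bar>a* C\<bar>* v3^2))"
    by (simp add: algebra_simps)
  show ?thesis unfolding e
    by (rule fin[OF main[unfolded dist] t1 t2 t3 t4 t5 t6 t7 t8 t9 t10 k1 k2 k3 k4 KK nn])
qed


lemma final_real:
  fixes a b c A B C t \<delta> K v1 v2 v3 :: real
  assumes K: "1 \<le> K" and a: "\<bar>a\<bar> \<le> K" and b0: "0 \<le> b" and bK: "b \<le> K"
    and A: "\<bar>A\<bar> \<le> K" and B: "\<bar>B\<bar> \<le> K" and C: "\<bar>C\<bar> \<le> K* b"
    and ac: "\<bar>a* c\<bar> \<le> b^2/100" and c: "\<bar>c\<bar> \<le> b* sqrt b/100" and t0: "0 \<le> t" and d: "0 < \<delta>" and tb: "\<delta>* t \<le> b"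
  shows "0 \<le> (3* v1* v1 + 2*(2* a)* v1* v2 + 2*(-b)* v1* v3 + 2*(a^2+b)* v2* v2 + 2*(-a* b-3* c)* v2* v3 + (b^2-2* a* c)* v3* v3)
     - (\<delta>/(40*(K* K))* t) * (2*(2* A)* v1* v2 + 2*(-B)* v1* v3 + (4* a* A+2* B)* v2* v2 + 2*(-(A* b+a* B)-3* C)* v2* v3 + (2* b* B-2*(A* c+a* C))* v3* v3)"
proof -
  define u where "u = 3* v1+2* a* v2-b* v3"
  define N where "N = (2* a^2/3+2* b)* v2^2-2*(a* b/3+3* c)* v2* v3+(2* b^2/3-2* a* c)* v3^2"
  define E where "E = 4/3* A* u* v2 - 2/3* B* u* v3 + (4/3* a* A+2* B)* v2^2 + (-2/3* A* b-2/3* a* B-6* C)* v2* v3 + (4/3* b* B-2* A* c-2* a* C)* v3^2"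
  define Q where "Q = (K* K)*(u^2) + (K* K)*(a^2* v2^2) + (K* K)*(b* v2^2) + (K* K)*(b^2* v3^2)"
  have eM: "3* v1* v1 + 2*(2* a)* v1* v2 + 2*(-b)* v1* v3 + 2*(a^2+b)* v2* v2 + 2*(-a* b-3* c)* v2* v3 + (b^2-2* a* c)* v3* v3 = u^2/3 + N"
    unfolding u_def N_def by (rule idM)
  have eD: "2*(2* A)* v1* v2 + 2*(-B)* v1* v3 + (4* a* A+2* B)* v2* v2 + 2*(-(A* b+a* B)-3* C)* v2* v3 + (2* b* B-2*(A* c+a* C))* v3* v3 = E"
    unfolding E_def by (rule idD) (simp add: u_def)
  have Nl: "N \<ge> (a^2* v2^2)/4 + (b* v2^2)/4 + (b^2* v3^2)/4" unfolding N_def by (rule Nlow[OF b0 ac c])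
  have KK1: "1 \<le> K* K" using K mult_mono[OF K K] by simp
  have Pb: "(\<delta>* t)* \<bar>E\<bar> \<le> 10* Q" unfolding E_def Q_def
    using Pbound[OF K a b0 bK A B C c _ tb, of u v2 v3] t0 d by (simp add: algebra_simps)
  have Qle: "10* Q \<le> (K* K)*(u^2/3 + N)*40"
  proof -
    have "(K* K)*((a^2* v2^2)/4 + (b* v2^2)/4 + (b^2* v3^2)/4) \<le> (K* K)* N" using Nl KK1 by (intro mult_left_mono) auto
    moreover have "(K* K)*(u^2/4) \<le> (K* K)*(u^2/3)" using KK1 by (intro mult_left_mono) auto
    ultimately show ?thesis unfolding Q_def by (simp add: algebra_simps)
  qed
  have pos: "0 < 40*(K* K)" using KK1 by simp
  have "(\<delta>/(40*(K* K))* t) * E \<le> (\<delta>/(40*(K* K))* t) * \<bar>E\<bar>" using d t0 pos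
    by (intro mult_left_mono) auto
  also have "\<dots> = ((\<delta>* t)* \<bar>E\<bar>)/(40*(K* K))" by simp
  also have "\<dots> \<le> (10* Q)/(40*(K* K))" using Pb pos by (intro divide_right_mono) auto
  also have "\<dots> \<le> ((K* K)*(u^2/3 + N)*40)/(40*(K* K))" using divide_right_mono[OF Qle, of "40*(K* K)"] pos by simp
  also have "\<dots> = u^2/3 + N" using K by simp
  finally show ?thesis unfolding eM eD by simp
qed


lemma basis_fst: "(i::('n::finite) pt) \<in> Basis \<Longrightarrow> fst i = 0 \<or> fst i = 1"
  by (auto simp: Basis_prod_def)

lemma dt_eq:
  fixes g :: "('n::finite) pt \<Rightarrow> real"
  assumes T: "T > 0" and z: "z \<in> Dom T" and g: "(g has_derivative g') (at z within Dom T)"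
  shows "dt T g z = g' tdir"
proof -
  have dg: "g differentiable (at z within Dom T)" using g by (auto simp: differentiable_def)
  have z0: "0 \<le> fst z" "fst z \<le> T" using z by (auto simp: Dom_def)
  have "frechet_derivative g (at z within Dom T) = g'"
  proof (rule frechet_derivative_unique_within[OF frechet_derivative_works[THEN iffD1, OF dg] g])
    fix i :: "('n::finite) pt" and e :: real
    assume i: "i \<in> Basis" and e: "e > 0"
    have mem: "z + d *\<^sub>R i \<in> Dom T \<longleftrightarrow> 0 \<le> fst z + d * fst i \<and> fst z + d * fst i \<le> T" for d
      by (cases z, cases i) (auto simp: Dom_def)
    show "\<exists>d. 0 < \<bar>d\<bar> \<and> \<bar>d\<bar> < e \<and> z + d *\<^sub>R i \<in> Dom T"
    proof (cases "fst i = 0")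
      case True
      thus ?thesis using e z0 by (intro exI[of _ "e/2"]) (simp add: mem)
    next
      case False
      hence i1: "fst i = 1" using basis_fst[OF i] by auto
      show ?thesis
      proof (cases "fst z < T")
        case True
        thus ?thesis using e z0 i1 by (intro exI[of _ "min e (T - fst z)/2"]) (auto simp: mem min_def field_simps)
      next
        case False
        have "z + (- (min e T)/2) *\<^sub>R i \<in> Dom T" unfolding mem using False e z0 i1 T
          by (auto simp: min_def field_simps)
        moreover have "0 < \<bar>- (min e T)/2\<bar>" "\<bar>- (min e T)/2\<bar> < e" using e T by (auto simp: min_def)
        ultimately show ?thesis by blast
      qed
    qed
  qed
  thus ?thesis by (simp add: dt_def dD_def)
qed



definition Dm :: "real \<Rightarrow> real \<Rightarrow> real \<Rightarrow> real \<Rightarrow> real \<Rightarrow> real \<Rightarrow> real^3^3" where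
  "Dm A B C a b c = (1/3) *\<^sub>R vector [
      vector [0, 2* A, -B],
      vector [2* A, 4* a* A+2* B, -(A* b+a* B)-3* C],
      vector [-B, -(A* b+a* B)-3* C, 2* b* B-2*(A* c+a* C)]]"

lemma dt_rule: "T > 0 \<Longrightarrow> z \<in> Dom T \<Longrightarrow> (g has_derivative g') (at z within Dom T) \<Longrightarrow> g' tdir = r \<Longrightarrow> dt T g z = r"
  using dt_eq by blast

lemma dt_rule3: "T > 0 \<Longrightarrow> z \<in> Dom T \<Longrightarrow> (g has_derivative g') (at z within Dom T) \<Longrightarrow> g' tdir * k = r \<Longrightarrow> dt T g z * k = r"
  using dt_eq by metis

lemma dtS_eq:
  fixes a b c :: "('n::finite) pt \<Rightarrow> real"
  assumes T: "T > 0" and z: "z \<in> Dom T" and da: "a differentiable (at z within Dom T)"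
   and db: "b differentiable (at z within Dom T)" and dc: "c differentiable (at z within Dom T)"
  shows "dtS T a b c z = Dm (dt T a z) (dt T b z) (dt T c z) (a z) (b z) (c z)"
proof -
  obtain A' where ha: "(a has_derivative A') (at z within Dom T)" using da by (auto simp: differentiable_def)
  obtain B' where hb: "(b has_derivative B') (at z within Dom T)" using db by (auto simp: differentiable_def)
  obtain C' where hc: "(c has_derivative C') (at z within Dom T)" using dc by (auto simp: differentiable_def)
  have ea: "dt T a z = A' tdir" by (rule dt_eq[OF T z ha])
  have eb: "dt T b z = B' tdir" by (rule dt_eq[OF T z hb])
  have ec: "dt T c z = C' tdir" by (rule dt_eq[OF T z hc])
  show ?thesis unfolding vec_eq_iff forall_3 ea eb ec
    apply (simp add: dtS_def Smat_def Dm_def)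
    apply (intro conjI)
    subgoal by (rule dt_rule3[OF T z] dt_rule[OF T z], (rule derivative_intros ha hb hc)+, auto simp: field_simps power2_eq_square)
    subgoal by (rule dt_rule3[OF T z] dt_rule[OF T z], (rule derivative_intros ha hb hc)+, auto simp: field_simps power2_eq_square)
    subgoal by (rule dt_rule3[OF T z] dt_rule[OF T z], (rule derivative_intros ha hb hc)+, auto simp: field_simps power2_eq_square)
    subgoal by (rule dt_rule3[OF T z] dt_rule[OF T z], (rule derivative_intros ha hb hc)+, auto simp: field_simps power2_eq_square)
    subgoal by (rule dt_rule3[OF T z] dt_rule[OF T z], (rule derivative_intros ha hb hc)+, auto simp: field_simps power2_eq_square)
    subgoal by (rule dt_rule3[OF T z] dt_rule[OF T z], (rule derivative_intros ha hb hc)+, auto simp: field_simps power2_eq_square)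
    subgoal by (rule dt_rule3[OF T z] dt_rule[OF T z], (rule derivative_intros ha hb hc)+, auto simp: field_simps power2_eq_square)
    subgoal by (rule dt_rule3[OF T z] dt_rule[OF T z], (rule derivative_intros ha hb hc)+, auto simp: field_simps power2_eq_square)
    subgoal by (rule dt_rule3[OF T z] dt_rule[OF T z], (rule derivative_intros ha hb hc)+, auto simp: field_simps power2_eq_square)
    done
qed


lemma ts_diff: "tsymbol0 T f \<Longrightarrow> z \<in> Dom T \<Longrightarrow> f differentiable (at z within Dom T)"
  unfolding tsymbol0_def by (drule spec[of _ "[]"]) auto

lemma ts_bound: "tsymbol0 T f \<Longrightarrow> \<exists>C. \<forall>z\<in>Dom T. \<bar>f z\<bar> \<le> C" for f :: "('n::finite) pt \<Rightarrow> real"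
proof -
  assume "tsymbol0 T f"
  then obtain C where C: "\<forall>z\<in>Dom T. \<bar>f z\<bar> \<le> C * (1 + norm (snd (snd z))) powr (- real 0)"
    unfolding tsymbol0_def by (drule_tac spec[of _ "[]"]) auto
  have "\<forall>z\<in>Dom T. \<bar>f z\<bar> \<le> C"
  proof
    fix z :: "('n::finite) pt" assume "z \<in> Dom T"
    moreover have "(1 + norm (snd (snd z))) powr (- real 0) = 1"
      by (simp add: add_pos_nonneg[of 1] order.strict_implies_not_eq[symmetric])
    ultimately show "\<bar>f z\<bar> \<le> C" using C by auto
  qed
  thus ?thesis by blast
qed

lemma ts_dt: "tsymbol0 T f \<Longrightarrow> \<exists>C. \<forall>z\<in>Dom T. \<bar>dt T f z\<bar> \<le> C" for f :: "('n::finite) pt \<Rightarrow> real"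
proof -
  assume h: "tsymbol0 T f"
  have td: "tdir \<in> dirs" by (simp add: dirs_def)
  have tx: "tdir \<notin> (xidirs :: ('n::finite) pt set)" by (auto simp: tdir_def xidirs_def)
  have fl: "length (filter (\<lambda>v. v \<in> (xidirs :: ('n::finite) pt set)) [tdir]) = 0" using tx by simp
  have "set [tdir] \<subseteq> (dirs :: ('n::finite) pt set)" using td by simp
  from h[unfolded tsymbol0_def, rule_format, OF this] obtain C where C: "\<forall>z\<in>Dom T. \<bar>dDs T [tdir] f z\<bar>
     \<le> C * (1 + norm (snd (snd z))) powr (- real 0)"
    unfolding fl by blast
  have "\<forall>z\<in>Dom T. \<bar>dt T f z\<bar> \<le> C"
  proof
    fix z :: "('n::finite) pt" assume "z \<in> Dom T"
    moreover have "(1 + norm (snd (snd z))) powr (- real 0) = 1"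
      by (simp add: add_pos_nonneg[of 1] order.strict_implies_not_eq[symmetric])
    ultimately show "\<bar>dt T f z\<bar> \<le> C" using C by (auto simp: dt_def)
  qed
  thus ?thesis by blast
qed

lemma qform:
  fixes v :: "real^3"
  shows "v \<bullet> ((Smat a b c - s *\<^sub>R Dm A B C a b c) *v v) =
   ((3*(v$1)*(v$1) + 2*(2* a)*(v$1)*(v$2) + 2*(-b)*(v$1)*(v$3) + 2*(a^2+b)*(v$2)*(v$2) + 2*(-a* b-3* c)*(v$2)*(v$3) + (b^2-2* a* c)*(v$3)*(v$3))
     - s * (2*(2* A)*(v$1)*(v$2) + 2*(-B)*(v$1)*(v$3) + (4* a* A+2* B)*(v$2)*(v$2) + 2*(-(A* b+a* B)-3* C)*(v$2)*(v$3) + (2* b* B-2*(A* c+a* C))*(v$3)*(v$3)))/3"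
  by (simp add: inner_vec_def matrix_vector_mult_def sum_3 Smat_def Dm_def field_simps power2_eq_square)

lemma qsym: "transpose (Smat a b c - s *\<^sub>R Dm A B C a b c) = Smat a b c - s *\<^sub>R Dm A B C a b c"
  by (simp add: transpose_def vec_eq_iff forall_3 Smat_def Dm_def)

lemma powr32: "0 \<le> b \<Longrightarrow> b powr (3/2) = b * sqrt (b::real)"
proof -
  assume b: "0 \<le> b"
  show ?thesis
  proof (cases "b = 0")
    case False
    have "b powr (3/2) = b powr (1 + 1/2)" by simp
    also have "\<dots> = b powr 1 * b powr (1/2)" by (rule powr_add)
    also have "\<dots> = b * sqrt b" using False b by (simp add: powr_half_sqrt)
    finally show ?thesis .
  qed simp
qed

theorem mainTheorem10:
  "\<exists>epsbar>0. \<forall>(T::real) (\<delta>1::real) (a::('n::finite) pt \<Rightarrow> real) b c.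
     T > 0 \<longrightarrow> \<delta>1 > 0 \<longrightarrow>
     tsymbol0 T a \<longrightarrow> tsymbol0 T b \<longrightarrow> tsymbol0 T c \<longrightarrow>
     (\<forall>z\<in>Dom T. b z \<ge> \<delta>1 * fst z) \<longrightarrow>
     (\<forall>z\<in>Dom T. \<bar>a z * c z\<bar> \<le> epsbar * (b z)^2) \<longrightarrow>
     (\<forall>z\<in>Dom T. \<bar>c z\<bar> \<le> epsbar * b z powr (3/2)) \<longrightarrow>
     (\<exists>C. \<forall>z\<in>Dom T. \<bar>dt T c z\<bar> \<le> C * b z) \<longrightarrow>
     (\<exists>\<epsilon>>0. \<forall>z\<in>Dom T.
        psd (Smat (a z) (b z) (c z) - (\<epsilon> * fst z) *\<^sub>R dtS T a b c z))"
proof (rule exI[of _ "1/100::real"], intro conjI allI impI)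
  show "(0::real) < 1/100" by simp
  fix T \<delta>1 :: real and a b c :: "('n::finite) pt \<Rightarrow> real"
  assume T: "T > 0" and d: "\<delta>1 > 0" and ta: "tsymbol0 T a" and tb: "tsymbol0 T b" and tc: "tsymbol0 T c"
    and hb: "\<forall>z\<in>Dom T. b z \<ge> \<delta>1 * fst z"
    and hac: "\<forall>z\<in>Dom T. \<bar>a z * c z\<bar> \<le> 1/100 * (b z)^2"
    and hc: "\<forall>z\<in>Dom T. \<bar>c z\<bar> \<le> 1/100 * b z powr (3/2)"
    and hdc: "\<exists>C. \<forall>z\<in>Dom T. \<bar>dt T c z\<bar> \<le> C * b z"
  obtain Ka where Ka: "\<forall>z\<in>Dom T. \<bar>a z\<bar> \<le> Ka" using ts_bound[OF ta] by blast
  obtain Kb where Kb: "\<forall>z\<in>Dom T. \<bar>b z\<bar> \<le> Kb" using ts_bound[OF tb] by blast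
  obtain KA where KA: "\<forall>z\<in>Dom T. \<bar>dt T a z\<bar> \<le> KA" using ts_dt[OF ta] by blast
  obtain KB where KB: "\<forall>z\<in>Dom T. \<bar>dt T b z\<bar> \<le> KB" using ts_dt[OF tb] by blast
  obtain Cc where Cc: "\<forall>z\<in>Dom T. \<bar>dt T c z\<bar> \<le> Cc * b z" using hdc by blast
  define K where "K = max 1 (max Ka (max Kb (max KA (max KB \<bar>Cc\<bar>))))"
  have K1: "1 \<le> K" and KKa: "Ka \<le> K" and KKb: "Kb \<le> K" and KKA: "KA \<le> K" and KKB: "KB \<le> K"
    and KCc: "\<bar>Cc\<bar> \<le> K" unfolding K_def by (simp_all add: le_max_iff_disj)
  have KK1: "1 \<le> K* K" using K1 mult_mono[OF K1 K1] by simp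
  define \<epsilon> where "\<epsilon> = \<delta>1/(40*(K* K))"
  show "\<exists>\<epsilon>>0. \<forall>z\<in>Dom T. psd (Smat (a z) (b z) (c z) - (\<epsilon> * fst z) *\<^sub>R dtS T a b c z)"
  proof (intro exI[of _ \<epsilon>] conjI ballI)
    show "\<epsilon> > 0" unfolding \<epsilon>_def using d KK1 by simp
    fix z :: "('n::finite) pt" assume z: "z \<in> Dom T"
    have t0: "0 \<le> fst z" using z by (auto simp: Dom_def)
    have b0: "0 \<le> b z" using hb z t0 d by (meson order.trans mult_nonneg_nonneg less_imp_le)
    have dS: "dtS T a b c z = Dm (dt T a z) (dt T b z) (dt T c z) (a z) (b z) (c z)"
      by (rule dtS_eq[OF T z ts_diff[OF ta z] ts_diff[OF tb z] ts_diff[OF tc z]])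
    have aK: "\<bar>a z\<bar> \<le> K" using Ka z KKa by force
    have bK: "b z \<le> K" using Kb z KKb by force
    have AK: "\<bar>dt T a z\<bar> \<le> K" using KA z KKA by force
    have BK: "\<bar>dt T b z\<bar> \<le> K" using KB z KKB by force
    have CK: "\<bar>dt T c z\<bar> \<le> K * b z"
    proof -
      have "Cc * b z \<le> \<bar>Cc\<bar> * b z" using b0 by (intro mult_right_mono) auto
      also have "\<dots> \<le> K * b z" using KCc b0 by (intro mult_right_mono) auto
      finally show ?thesis using Cc z by force
    qed
    have ac: "\<bar>a z * c z\<bar> \<le> (b z)^2/100" using hac z by force
    have c: "\<bar>c z\<bar> \<le> b z * sqrt (b z)/100" using hc z powr32[OF b0] by force
    have tb': "\<delta>1 * fst z \<le> b z" using hb z by force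
    show "psd (Smat (a z) (b z) (c z) - (\<epsilon> * fst z) *\<^sub>R dtS T a b c z)"
      unfolding psd_def dS
    proof (intro conjI allI)
      show "transpose (Smat (a z) (b z) (c z) - (\<epsilon> * fst z) *\<^sub>R Dm (dt T a z) (dt T b z) (dt T c z) (a z) (b z) (c z)) =
        Smat (a z) (b z) (c z) - (\<epsilon> * fst z) *\<^sub>R Dm (dt T a z) (dt T b z) (dt T c z) (a z) (b z) (c z)"
        by (rule qsym)
      fix v :: "real^3"
      show "0 \<le> v \<bullet> ((Smat (a z) (b z) (c z) - (\<epsilon> * fst z) *\<^sub>R Dm (dt T a z) (dt T b z) (dt T c z) (a z) (b z) (c z)) *v v)"
        unfolding qform \<epsilon>_def
        using final_real[OF K1 aK b0 bK AK BK CK ac c t0 d tb', of "v$1" "v$2" "v$3"] by simp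
    qed
  qed
qed
end
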